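(* Let $(X,d^\star)$ be a $\star$-metric space. Then the topological space $(X,\mathscr{T}_{d^\star})$ is metrizable, i.e. there exists a metric on $X$ inducing the topology $\mathscr{T}_{d^\star}$.
   Context: A $t$-definer is a function $\star:[0,\infty)\times[0,\infty)\to[0,\infty)$ such that for all $a,b,c\ge 0$: $a\star b=b\star a$; $a\star(b\star c)=(a\star b)\star c$; if $a\le b$ then $a\star c\le b\star c$; $a\star 0=a$; and $\star$ is continuous in its first variable with respect to the Euclidean topology. Given a nonempty set $X$ and a $t$-definer $\star$, a $\star$-metric on $X$ is a function $d^\star:X\times X\to[0,\infty)$ such that for all $x,y,z\in X$: $d^\star(x,y)=0$ iff $x=y$; $d^\star(x,y)=d^\star(y,x)$; and $d^\star(x,y)\le d^\star(x,z)\star d^\star(z,y)$. The pair $(X,d^\star)$ is a $\star$-metric space. For $a\in X$, $r>0$, put $B_{d^\star}(a,r)=\{x\in X: d^\star(a,x)<r\}$, and let $\mathscr{T}_{d^\star}$ be the family of all $U\subseteq X$ such that for each $a\in U$ there is $r>0$ with $B_{d^\star}(a,r)\subseteq U$ (this is a topology on $X$). *)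

theory Defs
  imports "HOL-Analysis.Analysis"
begin

text \<open>A t-definer: a binary operation on [0,\<infinity>), modelled as a real function whose
  relevant behaviour is on nonnegative arguments.\<close>
definition t_definer :: "(real \<Rightarrow> real \<Rightarrow> real) \<Rightarrow> bool" where
  "t_definer star \<longleftrightarrow>
     (\<forall>a b. 0 \<le> a \<longrightarrow> 0 \<le> b \<longrightarrow> 0 \<le> star a b) \<and>
     (\<forall>a b. 0 \<le> a \<longrightarrow> 0 \<le> b \<longrightarrow> star a b = star b a) \<and>
     (\<forall>a b c. 0 \<le> a \<longrightarrow> 0 \<le> b \<longrightarrow> 0 \<le> c \<longrightarrow> star a (star b c) = star (star a b) c) \<and>
     (\<forall>a b c. 0 \<le> a \<longrightarrow> 0 \<le> b \<longrightarrow> 0 \<le> c \<longrightarrow> a \<le> b \<longrightarrow> star a c \<le> star b c) \<and>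
     (\<forall>a. 0 \<le> a \<longrightarrow> star a 0 = a) \<and>
     (\<forall>b. 0 \<le> b \<longrightarrow> continuous_on {0..} (\<lambda>a. star a b))"

definition star_metric :: "(real \<Rightarrow> real \<Rightarrow> real) \<Rightarrow> 'a set \<Rightarrow> ('a \<Rightarrow> 'a \<Rightarrow> real) \<Rightarrow> bool" where
  "star_metric star X d \<longleftrightarrow>
     (\<forall>x\<in>X. \<forall>y\<in>X. 0 \<le> d x y) \<and>
     (\<forall>x\<in>X. \<forall>y\<in>X. d x y = 0 \<longleftrightarrow> x = y) \<and>
     (\<forall>x\<in>X. \<forall>y\<in>X. d x y = d y x) \<and>
     (\<forall>x\<in>X. \<forall>y\<in>X. \<forall>z\<in>X. d x y \<le> star (d x z) (d z y))"

definition star_ball :: "'a set \<Rightarrow> ('a \<Rightarrow> 'a \<Rightarrow> real) \<Rightarrow> 'a \<Rightarrow> real \<Rightarrow> 'a set" where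
  "star_ball X d a r = {x \<in> X. d a x < r}"

definition star_topology :: "'a set \<Rightarrow> ('a \<Rightarrow> 'a \<Rightarrow> real) \<Rightarrow> 'a topology" where
  "star_topology X d =
     topology (\<lambda>U. U \<subseteq> X \<and> (\<forall>a\<in>U. \<exists>r>0. star_ball X d a r \<subseteq> U))"

end

theory Submission
  imports Defs
begin

lemma tdef_facts:
  assumes "t_definer s"
  shows "\<And>a b. 0 \<le> a \<Longrightarrow> 0 \<le> b \<Longrightarrow> s a b = s b a"
    and "\<And>a b c. 0 \<le> a \<Longrightarrow> 0 \<le> b \<Longrightarrow> 0 \<le> c \<Longrightarrow> a \<le> b \<Longrightarrow> s a c \<le> s b c"
    and "\<And>a. 0 \<le> a \<Longrightarrow> s a 0 = a"
    and "\<And>b. 0 \<le> b \<Longrightarrow> continuous_on {0..} (\<lambda>a. s a b)"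
  using assms unfolding t_definer_def by simp_all

lemma tdef_mono2:
  assumes "t_definer s" "0 \<le> a" "0 \<le> b" "0 \<le> c" "b \<le> c"
  shows "s a b \<le> s a c"
  using tdef_facts[OF assms(1)] assms(2-) by metis

lemma tdef_point:
  assumes "t_definer s" "0 \<le> b" "e > 0"
  shows "\<exists>\<delta>>0. s \<delta> b < b + e"
proof -
  have "continuous_on {0..} (\<lambda>a. s a b)" using tdef_facts(4)[OF assms(1) assms(2)] .
  then obtain k where k: "k > 0" "\<forall>x'\<in>{0..}. dist x' 0 < k \<longrightarrow> dist (s x' b) (s 0 b) < e"
    using assms(3) unfolding continuous_on_iff by (meson atLeast_iff order_refl)
  have s0: "s 0 b = b" using tdef_facts(1,3)[OF assms(1)] assms(2) by (metis order_refl)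
  have "dist (s (k/2) b) b < e" using k s0 by auto
  then have "s (k/2) b < b + e" by (auto simp: dist_real_def)
  then show ?thesis using k(1) by (intro exI[of _ "k/2"]) auto
qed

lemma tdef_grid:
  assumes "t_definer s" "e > 0" "(M::nat) > 0"
  shows "\<exists>\<delta>>0. \<forall>i\<le>N. s \<delta> (real i / M) < real i / M + e"
proof (induction N)
  case 0
  then show ?case using tdef_point[OF assms(1) _ assms(2), of 0] by auto
next
  case (Suc N)
  then obtain d1 where d1: "d1 > 0" "\<forall>i\<le>N. s d1 (real i / M) < real i / M + e" by blast
  obtain d2 where d2: "d2 > 0" "s d2 (real (Suc N) / M) < real (Suc N) / M + e"
    using tdef_point[OF assms(1) _ assms(2), of "real (Suc N) / M"] by auto
  have "\<forall>i\<le>Suc N. s (min d1 d2) (real i / M) < real i / M + e"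
  proof (intro allI impI)
    fix i assume i: "i \<le> Suc N"
    show "s (min d1 d2) (real i / M) < real i / M + e"
    proof (cases "i = Suc N")
      case True
      have "s (min d1 d2) (real i / M) \<le> s d2 (real i / M)"
        using tdef_facts(2)[OF assms(1)] d1(1) d2(1) by simp
      then show ?thesis using d2 True by simp
    next
      case False
      then have "i \<le> N" using i by simp
      have "s (min d1 d2) (real i / M) \<le> s d1 (real i / M)"
        using tdef_facts(2)[OF assms(1)] d1(1) d2(1) by simp
      then show ?thesis using d1 \<open>i \<le> N\<close> by fastforce
    qed
  qed
  then show ?case using d1(1) d2(1) by (intro exI[of _ "min d1 d2"]) auto
qed

lemma tdef_uniform:
  assumes "t_definer s" "e > 0"
  shows "\<exists>\<delta>>0. \<forall>b. 0 \<le> b \<and> b \<le> 1 \<longrightarrow> s \<delta> b \<le> b + e"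
proof -
  obtain M :: nat where M: "M > 2 / e" using reals_Archimedean2 by blast
  have Mpos: "M > 0" using M assms(2)
    by (metis divide_pos_pos gr0I of_nat_0 order_less_asym zero_less_numeral)
  have Me: "1 / real M < e / 2" using M assms(2) Mpos
    by (simp add: field_simps)
  obtain \<delta> where d: "\<delta> > 0" "\<forall>i\<le>M. s \<delta> (real i / M) < real i / M + e/2"
    using tdef_grid[OF assms(1) _ Mpos, of "e/2" M] assms(2) by auto
  have "\<forall>b. 0 \<le> b \<and> b \<le> 1 \<longrightarrow> s \<delta> b \<le> b + e"
  proof (intro allI impI)
    fix b :: real assume b: "0 \<le> b \<and> b \<le> 1"
    define i where "i = nat \<lceil>b * M\<rceil>"
    have bM: "0 \<le> b * M" "b * M \<le> M" using b by (auto intro: mult_left_le_one_le)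
    have iM: "i \<le> M" using bM unfolding i_def by (simp add: nat_le_iff ceiling_le_iff)
    have ri: "real i = of_int \<lceil>b * M\<rceil>" using bM unfolding i_def by simp
    have lo: "b \<le> real i / M" using ri Mpos by (simp add: field_simps le_of_int_ceiling)
    have hi: "real i / M < b + 1 / M"
    proof -
      have "real i < b * M + 1" using ri by linarith
      then show ?thesis using Mpos by (simp add: field_simps)
    qed
    have "s \<delta> b \<le> s \<delta> (real i / M)"
      using tdef_mono2[OF assms(1)] d(1) b lo by simp
    also have "\<dots> < real i / M + e/2" using d iM by blast
    finally have "s \<delta> b < real i / M + e/2" .
    then show "s \<delta> b \<le> b + e" using hi Me by linarith
  qed
  then show ?thesis using d(1) by (intro exI[of _ \<delta>]) simp
qed


theorem theorem2p4:
  fixes star :: "real \<Rightarrow> real \<Rightarrow> real" and X :: "'a set" and d :: "'a \<Rightarrow> 'a \<Rightarrow> real"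
  assumes "X \<noteq> {}"
    and "t_definer star"
    and "star_metric star X d"
  shows "metrizable_space (star_topology X d)"
proof -
  note T = assms(2)
  have Hall: "(\<forall>x\<in>X. \<forall>y\<in>X. 0 \<le> d x y) \<and>
     (\<forall>x\<in>X. \<forall>y\<in>X. d x y = 0 \<longleftrightarrow> x = y) \<and>
     (\<forall>x\<in>X. \<forall>y\<in>X. d x y = d y x) \<and>
     (\<forall>x\<in>X. \<forall>y\<in>X. \<forall>z\<in>X. d x y \<le> star (d x z) (d z y))"
    using assms(3) unfolding star_metric_def .
  have dnn: "\<And>x y. x \<in> X \<Longrightarrow> y \<in> X \<Longrightarrow> 0 \<le> d x y"
    using Hall by simp
  have d0: "\<And>x y. x \<in> X \<Longrightarrow> y \<in> X \<Longrightarrow> d x y = 0 \<longleftrightarrow> x = y"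
    using Hall by simp
  have dsym: "\<And>x y. x \<in> X \<Longrightarrow> y \<in> X \<Longrightarrow> d x y = d y x"
    using Hall by simp
  have dtri: "\<And>x y z. x \<in> X \<Longrightarrow> y \<in> X \<Longrightarrow> z \<in> X \<Longrightarrow> d x z \<le> star (d x y) (d y z)"
    using Hall by simp
  define \<psi> where "\<psi> x z = min (d x z) 1" for x z
  define \<rho> where "\<rho> x y = (if x \<in> X \<and> y \<in> X then (SUP z\<in>X. \<bar>\<psi> x z - \<psi> y z\<bar>) else 0)" for x y
  have psi: "\<And>x z. x \<in> X \<Longrightarrow> z \<in> X \<Longrightarrow> 0 \<le> \<psi> x z \<and> \<psi> x z \<le> 1"
    using dnn unfolding \<psi>_def by auto
  have bdd: "\<And>x y. x \<in> X \<Longrightarrow> y \<in> X \<Longrightarrow> bdd_above ((\<lambda>z. \<bar>\<psi> x z - \<psi> y z\<bar>) ` X)"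
  proof -
    fix x y assume "x \<in> X" "y \<in> X"
    then have "\<forall>z\<in>X. \<bar>\<psi> x z - \<psi> y z\<bar> \<le> 1" using psi by (smt (verit))
    then show "bdd_above ((\<lambda>z. \<bar>\<psi> x z - \<psi> y z\<bar>) ` X)" by (intro bdd_aboveI2) blast
  qed
  have upper: "\<And>x y z. x \<in> X \<Longrightarrow> y \<in> X \<Longrightarrow> z \<in> X \<Longrightarrow> \<bar>\<psi> x z - \<psi> y z\<bar> \<le> \<rho> x y"
  proof -
    fix x y z assume h: "x \<in> X" "y \<in> X" "z \<in> X"
    show "\<bar>\<psi> x z - \<psi> y z\<bar> \<le> \<rho> x y"
      unfolding \<rho>_def using h cSUP_upper[OF h(3) bdd[OF h(1,2)]] by simp
  qed
  have least: "\<And>x y c. x \<in> X \<Longrightarrow> y \<in> X \<Longrightarrow> (\<And>z. z \<in> X \<Longrightarrow> \<bar>\<psi> x z - \<psi> y z\<bar> \<le> c) \<Longrightarrow> \<rho> x y \<le> c"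
    unfolding \<rho>_def using assms(1) by (simp add: cSUP_least)
  have ms: "Metric_space X \<rho>"
  proof
    fix x y
    show "0 \<le> \<rho> x y"
    proof (cases "x \<in> X \<and> y \<in> X")
      case True
      then show ?thesis using upper[of x y x] by (meson abs_ge_zero order_trans)
    next
      case False
      then show ?thesis unfolding \<rho>_def by auto
    qed
    show "\<rho> x y = \<rho> y x"
      unfolding \<rho>_def by (auto simp: abs_minus_commute)
  next
    fix x y assume xy: "x \<in> X" "y \<in> X"
    show "\<rho> x y = 0 \<longleftrightarrow> x = y"
    proof
      assume "x = y"
      then show "\<rho> x y = 0" using assms(1) xy unfolding \<rho>_def by simp
    next
      assume r0: "\<rho> x y = 0"
      have "\<bar>\<psi> x y - \<psi> y y\<bar> \<le> 0" using upper[OF xy xy(2)] r0 by simp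
      then have "\<psi> x y = 0" using d0[OF xy(2) xy(2)] unfolding \<psi>_def by simp
      then have "d x y = 0" unfolding \<psi>_def by (simp add: min_def split: if_splits)
      then show "x = y" using d0 xy by blast
    qed
  next
    fix x y z assume xyz: "x \<in> X" "y \<in> X" "z \<in> X"
    show "\<rho> x z \<le> \<rho> x y + \<rho> y z"
    proof (rule least[OF xyz(1) xyz(3)])
      fix w assume w: "w \<in> X"
      have "\<bar>\<psi> x w - \<psi> z w\<bar> \<le> \<bar>\<psi> x w - \<psi> y w\<bar> + \<bar>\<psi> y w - \<psi> z w\<bar>" by linarith
      also have "\<dots> \<le> \<rho> x y + \<rho> y z" using upper[OF xyz(1,2) w] upper[OF xyz(2,3) w] by linarith
      finally show "\<bar>\<psi> x w - \<psi> z w\<bar> \<le> \<rho> x y + \<rho> y z" .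
    qed
  qed
  have A: "\<And>x y r. x \<in> X \<Longrightarrow> y \<in> X \<Longrightarrow> \<rho> x y < min r 1 \<Longrightarrow> d x y < r"
  proof -
    fix x y r assume xy: "x \<in> X" "y \<in> X" and r: "\<rho> x y < min r 1"
    have "\<bar>\<psi> x y - \<psi> y y\<bar> \<le> \<rho> x y" using upper[OF xy xy(2)] .
    then have "\<psi> x y \<le> \<rho> x y" using d0[OF xy(2) xy(2)] dnn[OF xy] unfolding \<psi>_def by simp
    then have "\<psi> x y < min r 1" using r by linarith
    then show "d x y < r" unfolding \<psi>_def by (auto simp: min_def split: if_splits)
  qed
  have B: "\<And>r. r > 0 \<Longrightarrow> \<exists>\<delta>>0. \<forall>x\<in>X. \<forall>y\<in>X. d x y < \<delta> \<longrightarrow> \<rho> x y < r"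
  proof -
    fix r :: real assume r: "r > 0"
    obtain \<delta> where dl: "\<delta> > 0" "\<forall>b. 0 \<le> b \<and> b \<le> 1 \<longrightarrow> star \<delta> b \<le> b + r/2"
      using tdef_uniform[OF T, of "r/2"] r by auto
    have one: "\<psi> x z \<le> \<psi> y z + r/2" if xyz: "x \<in> X" "y \<in> X" "z \<in> X" and dxy: "d x y < \<delta>" for x y z
    proof (cases "d y z \<le> 1")
      case True
      have "d x z \<le> star (d x y) (d y z)" using dtri xyz by blast
      also have "\<dots> \<le> star \<delta> (d y z)"
        using tdef_facts(2)[OF T] dnn xyz dxy dl(1) by simp
      also have "\<dots> \<le> d y z + r/2" using dl(2) True dnn xyz by blast
      finally show ?thesis unfolding \<psi>_def using True by linarith
    next
      case False
      then show ?thesis unfolding \<psi>_def using r by simp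
    qed
    have "\<forall>x\<in>X. \<forall>y\<in>X. d x y < \<delta> \<longrightarrow> \<rho> x y < r"
    proof (intro ballI impI)
      fix x y assume xy: "x \<in> X" "y \<in> X" and dxy: "d x y < \<delta>"
      have dyx: "d y x < \<delta>" using dxy dsym xy by simp
      have "\<rho> x y \<le> r/2"
      proof (rule least[OF xy])
        fix z assume z: "z \<in> X"
        show "\<bar>\<psi> x z - \<psi> y z\<bar> \<le> r/2"
          using one[OF xy z dxy] one[OF xy(2) xy(1) z dyx] by linarith
      qed
      then show "\<rho> x y < r" using r by linarith
    qed
    then show "\<exists>\<delta>>0. \<forall>x\<in>X. \<forall>y\<in>X. d x y < \<delta> \<longrightarrow> \<rho> x y < r" using dl(1) by blast
  qed
  have eqP: "(\<lambda>U. U \<subseteq> X \<and> (\<forall>a\<in>U. \<exists>r>0. star_ball X d a r \<subseteq> U)) = openin (Metric_space.mtopology X \<rho>)"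
  proof (rule ext)
    fix U
    show "(U \<subseteq> X \<and> (\<forall>a\<in>U. \<exists>r>0. star_ball X d a r \<subseteq> U)) = openin (Metric_space.mtopology X \<rho>) U"
      unfolding Metric_space.openin_mtopology[OF ms] Metric_space.in_mball[OF ms, symmetric]
    proof (intro iffI conjI allI impI; elim conjE)
      assume UX: "U \<subseteq> X" and H: "\<forall>a\<in>U. \<exists>r>0. star_ball X d a r \<subseteq> U"
      show "U \<subseteq> X" by fact
      fix a assume a: "a \<in> U"
      then obtain r where r: "r > 0" "star_ball X d a r \<subseteq> U" using H by blast
      have "Metric_space.mball X \<rho> a (min r 1) \<subseteq> U"
      proof
        fix y assume "y \<in> Metric_space.mball X \<rho> a (min r 1)"
        then have y: "a \<in> X" "y \<in> X" "\<rho> a y < min r 1" using Metric_space.in_mball[OF ms] by auto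
        then have "y \<in> star_ball X d a r" using A unfolding star_ball_def by blast
        then show "y \<in> U" using r by blast
      qed
      then show "\<exists>r>0. Metric_space.mball X \<rho> a r \<subseteq> U" using r(1) by (intro exI[of _ "min r 1"]) auto
    next
      assume UX: "U \<subseteq> X" and H: "\<forall>x. x \<in> U \<longrightarrow> (\<exists>r>0. Metric_space.mball X \<rho> x r \<subseteq> U)"
      show "U \<subseteq> X" by fact
      show "\<forall>a\<in>U. \<exists>r>0. star_ball X d a r \<subseteq> U"
      proof
        fix a assume a: "a \<in> U"
        then obtain r where r: "r > 0" "Metric_space.mball X \<rho> a r \<subseteq> U" using H by blast
        obtain \<delta> where dl: "\<delta> > 0" "\<forall>x\<in>X. \<forall>y\<in>X. d x y < \<delta> \<longrightarrow> \<rho> x y < r" using B[OF r(1)] by blast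
        have "star_ball X d a \<delta> \<subseteq> U"
        proof
          fix y assume "y \<in> star_ball X d a \<delta>"
          then have "y \<in> X" "d a y < \<delta>" unfolding star_ball_def by auto
          then have "y \<in> Metric_space.mball X \<rho> a r"
            using dl a UX Metric_space.in_mball[OF ms] by blast
          then show "y \<in> U" using r by blast
        qed
        then show "\<exists>r>0. star_ball X d a r \<subseteq> U" using dl(1) by blast
      qed
    qed
  qed
  have "star_topology X d = Metric_space.mtopology X \<rho>"
    unfolding star_topology_def eqP by (simp add: openin_inverse)
  then show ?thesis using Metric_space.metrizable_space_mtopology[OF ms] by simp
qed

end
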